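(* Let $a\neq 0$, $b$ be integers with $\gcd(a,b)=1$, let $k\ge 1$ be an integer, and let $c_1,e_1\in\mathbb{Q}\setminus\{0\}$, $c_0,e_0\in\mathbb{Q}$. Then there is no integer $m>4$ and no $\delta\in\mathbb{Q}\setminus\{0\}$ such that the polynomial identity $$S_{a,b}^k(c_1x+c_0)=e_1D_m(x,\delta)+e_0$$ holds in $\mathbb{Q}[x]$.
   Context: The Bernoulli polynomials $B_n(x)$ are defined by $\frac{t e^{tx}}{e^t-1}=\sum_{n\ge 0}B_n(x)\frac{t^n}{n!}$. For integers $a\neq 0$, $b$ with $\gcd(a,b)=1$ and an integer $k\ge 1$, define the polynomial $$S_{a,b}^k(x):=\frac{a^k}{k+1}\left(B_{k+1}\!\left(x+\frac{b}{a}\right)-B_{k+1}\!\left(\frac{b}{a}\right)\right)\in\mathbb{Q}[x].$$ For a positive integer $m$ and a number $\delta$, the $m$-th Dickson polynomial with parameter $\delta$ is $$D_m(x,\delta)=\sum_{i=0}^{\lfloor m/2\rfloor}\frac{m}{m-i}\binom{m-i}{i}(-\delta)^i x^{m-2i},$$ equivalently characterized by $D_m(z+\delta/z,\delta)=z^m+(\delta/z)^m$. *)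

theory Defs
  imports "HOL-Computational_Algebra.Polynomial"
begin

text \<open>Bernoulli numbers with the convention t/(e^t - 1) = sum B_n t^n/n!, i.e. B_1 = -1/2,
  given by the recurrence  sum_{j=0}^{n} (n+1 choose j) B_j = 0 for n >= 1, B_0 = 1.\<close>
fun bernoulli_num :: "nat \<Rightarrow> rat" where
  "bernoulli_num n =
     (if n = 0 then 1
      else - (\<Sum>j<n. of_nat ((n + 1) choose j) * (if j < n then bernoulli_num j else 0))
             / of_nat (n + 1))"

definition bernpoly :: "nat \<Rightarrow> rat poly" where
  "bernpoly n = (\<Sum>j\<le>n. monom (of_nat (n choose j) * bernoulli_num j) (n - j))"

definition S_poly :: "int \<Rightarrow> int \<Rightarrow> nat \<Rightarrow> rat poly" where
  "S_poly a b k =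
     smult (of_int a ^ k / of_nat (k + 1))
       (pcompose (bernpoly (k + 1)) [:of_int b / of_int a, 1:]
        - [:poly (bernpoly (k + 1)) (of_int b / of_int a):])"

definition dickson :: "nat \<Rightarrow> rat \<Rightarrow> rat poly" where
  "dickson m \<delta> =
     (\<Sum>i\<le>m div 2. monom (of_nat m / of_nat (m - i) * of_nat ((m - i) choose i) * (- \<delta>) ^ i)
                          (m - 2 * i))"

end

theory Submission imports Defs begin

lemma pcompose_monom': "pcompose (monom c d) q = smult c (q ^ d)"
  by (induction d) (simp_all add: pcompose_pCons monom_Suc monom_0)

lemma coeff_lin_pow: "coeff ([:t, s:] ^ d) l = of_nat (d choose l) * t ^ (d - l) * s ^ l"
proof (induction d arbitrary: l)
  case 0 then show ?case by (cases l) auto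
next
  case (Suc d)
  have eq: "[:t, s:] ^ Suc d = smult t ([:t, s:] ^ d) + pCons 0 (smult s ([:t, s:] ^ d))"
    by (simp add: algebra_simps smult_add_left mult_poly_0_left mult.commute)
  show ?case
  proof (cases l)
    case 0 then show ?thesis unfolding eq by (simp add: Suc)
  next
    case (Suc l')
    show ?thesis
    proof (cases "l' < d")
      case True
      then have "d - l' = Suc (d - Suc l')" by simp
      then show ?thesis unfolding eq using Suc
        by (simp add: Suc.IH algebra_simps power_Suc)
    next
      case False
      then show ?thesis unfolding eq using Suc
        by (cases "l' = d") (simp_all add: Suc.IH binomial_eq_0)
    qed
  qed
qed

lemma bn0: "bernoulli_num 0 = 1" by simp
declare bernoulli_num.simps[simp del]
lemma bs1: "bernoulli_num (Suc 0) = -1/2" by (subst bernoulli_num.simps, simp add: bn0 numeral_eq_Suc lessThan_Suc)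
lemma bs2: "bernoulli_num (Suc (Suc 0)) = 1/6" by (subst bernoulli_num.simps, simp add: bn0 bs1 numeral_eq_Suc lessThan_Suc)
lemma bs3: "bernoulli_num (Suc (Suc (Suc 0))) = 0" by (subst bernoulli_num.simps, simp add: bn0 bs1 bs2 numeral_eq_Suc lessThan_Suc)
lemma bs4: "bernoulli_num (Suc (Suc (Suc (Suc 0)))) = -1/30" by (subst bernoulli_num.simps, simp add: bn0 bs1 bs2 bs3 numeral_eq_Suc lessThan_Suc)

lemma coeff_bern_comp: "coeff (pcompose (bernpoly n) [:t, s:]) l =
  (\<Sum>j\<le>n. of_nat (n choose j) * bernoulli_num j * (of_nat ((n - j) choose l) * t ^ (n - j - l) * s ^ l))"
  by (simp add: bernpoly_def pcompose_sum pcompose_monom' coeff_sum coeff_lin_pow)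

lemma poly_bern: "poly (bernpoly r) t = (\<Sum>j\<le>r. of_nat (r choose j) * bernoulli_num j * t ^ (r - j))"
  by (simp add: bernpoly_def poly_sum poly_monom)

lemma coeff_bern_top:
  assumes "r \<le> n"
  shows "coeff (pcompose (bernpoly n) [:t, s:]) (n - r) = of_nat (n choose r) * s ^ (n - r) * poly (bernpoly r) t"
proof -
  have "coeff (pcompose (bernpoly n) [:t, s:]) (n - r) =
    (\<Sum>j\<le>r. of_nat (n choose j) * bernoulli_num j * (of_nat ((n - j) choose (n - r)) * t ^ (n - j - (n - r)) * s ^ (n - r)))"
    unfolding coeff_bern_comp
  proof (rule sum.mono_neutral_right)
    show "\<forall>j\<in>{..n} - {..r}. of_nat (n choose j) * bernoulli_num j * (of_nat ((n - j) choose (n - r)) * t ^ (n - j - (n - r)) * s ^ (n - r)) = 0"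
    proof
      fix j assume "j \<in> {..n} - {..r}"
      then have "n - j < n - r" using assms by auto
      then show "of_nat (n choose j) * bernoulli_num j * (of_nat ((n - j) choose (n - r)) * t ^ (n - j - (n - r)) * s ^ (n - r)) = 0"
        by (simp add: binomial_eq_0)
    qed
  qed (use assms in auto)
  also have "\<dots> = (\<Sum>j\<le>r. of_nat (n choose r) * s ^ (n - r) * (of_nat (r choose j) * bernoulli_num j * t ^ (r - j)))"
  proof (rule sum.cong[OF refl])
    fix j assume j: "j \<in> {..r}"
    then have j': "j \<le> r" by simp
    have c1: "(n - j) choose (n - r) = (n - j) choose (r - j)"
      using binomial_symmetric[of "n - r" "n - j"] j' assms by simp
    have c2: "(n choose r) * (r choose j) = (n choose j) * ((n - j) choose (r - j))"
      using choose_mult[OF j' assms] .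
    have c3: "(of_nat (n choose j) :: rat) * of_nat ((n - j) choose (n - r)) = of_nat (n choose r) * of_nat (r choose j)"
      unfolding c1 using c2 by (metis of_nat_mult)
    have e: "n - j - (n - r) = r - j" using j' assms by simp
    show "of_nat (n choose j) * bernoulli_num j * (of_nat ((n - j) choose (n - r)) * t ^ (n - j - (n - r)) * s ^ (n - r)) =
          of_nat (n choose r) * s ^ (n - r) * (of_nat (r choose j) * bernoulli_num j * t ^ (r - j))"
      unfolding e using c3 by (simp add: algebra_simps)
  qed
  also have "\<dots> = of_nat (n choose r) * s ^ (n - r) * poly (bernpoly r) t"
    by (simp add: poly_bern sum_distrib_left)
  finally show ?thesis .
qed

lemma coeff_bern_high:
  assumes "n < l"
  shows "coeff (pcompose (bernpoly n) [:t, s:]) l = 0"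
  unfolding coeff_bern_comp using assms by (intro sum.neutral) auto

lemma pb0: "poly (bernpoly 0) t = 1" by (simp add: poly_bern bn0)
lemma pb1: "poly (bernpoly 1) t = t - 1/2" by (simp add: poly_bern bs1 bn0)
lemma pb2: "poly (bernpoly 2) (1/2) = -1/12"
  by (simp add: poly_bern bn0 bs1 bs2 numeral_eq_Suc atMost_Suc)
lemma pb4: "poly (bernpoly 4) (1/2) = 7/240"
  by (simp add: poly_bern bn0 bs1 bs2 bs3 bs4 numeral_eq_Suc atMost_Suc)

lemma dk: "coeff (dickson m \<delta>) l = (\<Sum>i\<le>m div 2. if m - 2 * i = l then
   of_nat m / of_nat (m - i) * of_nat ((m - i) choose i) * (- \<delta>) ^ i else 0)"
  unfolding dickson_def coeff_sum coeff_monom by (rule refl)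

lemma dk_at:
  assumes "i0 \<le> m div 2"
  shows "coeff (dickson m \<delta>) (m - 2 * i0) = of_nat m / of_nat (m - i0) * of_nat ((m - i0) choose i0) * (- \<delta>) ^ i0"
proof -
  have "\<forall>i\<in>{..m div 2}. (m - 2 * i = m - 2 * i0) = (i = i0)" using assms by auto
  then have "coeff (dickson m \<delta>) (m - 2 * i0) = (\<Sum>i\<le>m div 2. if i = i0 then
   of_nat m / of_nat (m - i) * of_nat ((m - i) choose i) * (- \<delta>) ^ i else 0)"
    unfolding dk by (intro sum.cong) auto
  then show ?thesis using assms by simp
qed

lemma dk_high:
  assumes "m < l"
  shows "coeff (dickson m \<delta>) l = 0"
  unfolding dk using assms by (intro sum.neutral) auto

lemma dk_odd:
  assumes "1 \<le> m"
  shows "coeff (dickson m \<delta>) (m - 1) = 0"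
  unfolding dk
proof (intro sum.neutral ballI)
  fix i assume "i \<in> {..m div 2}"
  then have "m - 2 * i \<noteq> m - 1" using assms by auto presburger
  then show "(if m - 2 * i = m - 1 then of_nat m / of_nat (m - i) * of_nat ((m - i) choose i) * (- \<delta>) ^ i else 0) = 0" by simp
qed

lemma ch2: "(of_nat (n choose 2) :: rat) = of_nat n * (of_nat n - 1) / 2"
  by (simp add: binomial_gbinomial gbinomial_prod_rev numeral_eq_Suc atLeast0LessThan lessThan_Suc)

lemma ch4: "(of_nat (n choose 4) :: rat) = of_nat n * (of_nat n - 1) * (of_nat n - 2) * (of_nat n - 3) / 24"
  by (simp add: binomial_gbinomial gbinomial_prod_rev numeral_eq_Suc atLeast0LessThan lessThan_Suc)


theorem lemma4:
  fixes a b :: int and k :: nat and c1 c0 e1 e0 :: rat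
  assumes "a \<noteq> 0" and "gcd a b = 1" and "k \<ge> 1"
    and "c1 \<noteq> 0" and "e1 \<noteq> 0"
  shows "\<not> (\<exists>(m::nat) (\<delta>::rat). m > 4 \<and> \<delta> \<noteq> 0 \<and>
           pcompose (S_poly a b k) [:c0, c1:] = smult e1 (dickson m \<delta>) + [:e0:])"
proof
  assume "\<exists>(m::nat) (\<delta>::rat). m > 4 \<and> \<delta> \<noteq> 0 \<and>
           pcompose (S_poly a b k) [:c0, c1:] = smult e1 (dickson m \<delta>) + [:e0:]"
  then obtain m \<delta> where m4: "m > 4" and d0: "\<delta> \<noteq> 0"
    and E: "pcompose (S_poly a b k) [:c0, c1:] = smult e1 (dickson m \<delta>) + [:e0:]" by blast
  define n where "n = k + 1"
  define A :: rat where "A = of_int a ^ k / of_nat (k + 1)"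
  define t :: rat where "t = of_int b / of_int a + c0"
  define K where "K = poly (bernpoly (k + 1)) (of_int b / of_int a)"
  define Q where "Q = pcompose (bernpoly n) [:t, c1:]"
  have A0: "A \<noteq> 0" using assms(1) by (simp add: A_def)
  have lin: "pcompose [:of_int b / of_int a, 1:] [:c0, c1:] = [:t, c1:]"
    by (simp add: pcompose_pCons t_def)
  have P: "pcompose (S_poly a b k) [:c0, c1:] = smult A (Q - [:K:])"
    unfolding S_poly_def Q_def A_def K_def n_def
    by (simp add: pcompose_smult pcompose_diff pcompose_assoc[symmetric] lin)
  have key: "A * coeff Q l = e1 * coeff (dickson m \<delta>) l" if "l \<ge> 1" for l
  proof -
    have "coeff (pcompose (S_poly a b k) [:c0, c1:]) l = coeff (smult e1 (dickson m \<delta>) + [:e0:]) l"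
      using E by simp
    moreover have "coeff [:K:] l = 0" "coeff [:e0:] l = 0" using that by (cases l; simp)+
    ultimately show ?thesis unfolding P by simp
  qed
  have Qhigh: "coeff Q l = 0" if "n < l" for l
    unfolding Q_def using coeff_bern_high[OF that] .
  have Qtop: "coeff Q (n - r) = of_nat (n choose r) * c1 ^ (n - r) * poly (bernpoly r) t" if "r \<le> n" for r
    unfolding Q_def using coeff_bern_top[OF that] .
  have n1: "n \<ge> 1" unfolding n_def by simp
  have m_eq: "m = n"
  proof (rule ccontr)
    assume "m \<noteq> n"
    then consider "m > n" | "m < n" by linarith
    then show False
    proof cases
      case 1
      have "A * coeff Q m = e1 * coeff (dickson m \<delta>) m" using key[of m] m4 by simp
      moreover have "coeff (dickson m \<delta>) m = 1" using dk_at[of 0 m \<delta>] m4 by simp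
      ultimately show False using Qhigh[OF 1] assms(5) by simp
    next
      case 2
      have "A * coeff Q n = e1 * coeff (dickson m \<delta>) n" using key[of n] n1 by simp
      moreover have "coeff (dickson m \<delta>) n = 0" using dk_high[OF 2] .
      moreover have "coeff Q n = c1 ^ n" using Qtop[of 0] by (simp add: pb0)
      ultimately show False using A0 assms(4) by simp
    qed
  qed
  have n4: "n > 4" using m4 m_eq by simp
  define N :: rat where "N = of_nat n"
  define u where "u = c1 ^ (n - 4)"
  have u0: "u \<noteq> 0" using assms(4) by (simp add: u_def)
  have pw4: "c1 ^ n = u * c1 ^ 4" unfolding u_def using n4 by (simp flip: power_add)
  have pw2: "c1 ^ (n - 2) = u * c1 ^ 2"
  proof -
    have "n - 2 = (n - 4) + 2" using n4 by simp
    then show ?thesis unfolding u_def by (simp only: power_add)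
  qed
  have N1: "of_nat (n - 1) = N - 1" "of_nat (n - 2) = N - 2" using n4 by (simp_all add: N_def of_nat_diff)
  have E0: "A * c1 ^ n = e1"
  proof -
    have "A * coeff Q n = e1 * coeff (dickson n \<delta>) n" using key[of n] n1 m_eq by simp
    moreover have "coeff (dickson n \<delta>) n = 1" using dk_at[of 0 n \<delta>] n4 by simp
    moreover have "coeff Q n = c1 ^ n" using Qtop[of 0] by (simp add: pb0)
    ultimately show ?thesis by simp
  qed
  have t2: "t = 1/2"
  proof -
    have "A * coeff Q (n - 1) = e1 * coeff (dickson n \<delta>) (n - 1)" using key[of "n - 1"] n4 m_eq by simp
    moreover have "coeff (dickson n \<delta>) (n - 1) = 0" using dk_odd n1 by simp
    moreover have "coeff Q (n - 1) = of_nat n * c1 ^ (n - 1) * (t - 1/2)" using Qtop[of 1] n1 pb1[of t] by simp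
    ultimately show ?thesis using A0 assms(4) n1 by simp
  qed
  have E2: "A * (N * (N - 1) / 2 * (u * c1 ^ 2) * (-1/12)) = e1 * (N / (N - 1) * (N - 1) * (- \<delta>))"
  proof -
    have "A * coeff Q (n - 2) = e1 * coeff (dickson n \<delta>) (n - 2)" using key[of "n - 2"] n4 m_eq by simp
    moreover have "coeff (dickson n \<delta>) (n - 2) = N / (N - 1) * (N - 1) * (- \<delta>)"
      using dk_at[of 1 n \<delta>] n4 N1 by (simp add: N_def)
    moreover have "coeff Q (n - 2) = N * (N - 1) / 2 * (u * c1 ^ 2) * (-1/12)"
      using Qtop[of 2] n4 by (simp add: pb2 t2 ch2 pw2 N_def)
    ultimately show ?thesis by simp
  qed
  have E4: "A * (N * (N - 1) * (N - 2) * (N - 3) / 24 * u * (7/240)) = e1 * (N / (N - 2) * ((N - 2) * (N - 2 - 1) / 2) * \<delta> ^ 2)"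
  proof -
    have "A * coeff Q (n - 4) = e1 * coeff (dickson n \<delta>) (n - 4)" using key[of "n - 4"] n4 m_eq by simp
    moreover have "coeff (dickson n \<delta>) (n - 2 * 2) = N / (N - 2) * ((N - 2) * (N - 2 - 1) / 2) * \<delta> ^ 2"
      using dk_at[of 2 n \<delta>] n4 N1 ch2[of "n - 2"] by (simp add: N_def)
    moreover have "coeff Q (n - 4) = N * (N - 1) * (N - 2) * (N - 3) / 24 * u * (7/240)"
      using Qtop[of 4] n4 by (simp add: pb4 t2 ch4 u_def N_def)
    ultimately show ?thesis by simp
  qed
  have Nb: "N > 4" using n4 by (simp add: N_def)
  have e1d: "e1 = A * u * c1 ^ 4" using E0 pw4 by simp
  have D: "c1 ^ 2 * \<delta> = (N - 1) / 24"
  proof -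
    have NN: "N / (N - 1) * (N - 1) = N" using Nb by simp
    have c4: "c1 ^ 4 = c1 ^ 2 * c1 ^ 2" by (simp flip: power_add)
    have E2': "A * (N * (N - 1) / 2 * (u * c1 ^ 2) * (-1/12)) = A * u * (c1 ^ 2 * c1 ^ 2) * (N * (- \<delta>))"
      using E2 unfolding NN e1d c4 by simp
    have "(A * u * c1 ^ 2 * N) * (c1 ^ 2 * \<delta>) = (A * u * c1 ^ 2 * N) * ((N - 1) / 24)"
      using E2' by (simp add: algebra_simps)
    then show ?thesis using A0 u0 assms(4) Nb by simp
  qed
  have NN2: "N / (N - 2) * ((N - 2) * (N - 2 - 1) / 2) = N * (N - 3) / 2" using Nb by (simp add: field_simps)
  have c4: "c1 ^ 4 * \<delta> ^ 2 = (c1 ^ 2 * \<delta>) ^ 2" by (simp add: power_mult_distrib flip: power_mult)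
  have E4': "A * (N * (N - 1) * (N - 2) * (N - 3) / 24 * u * (7/240)) = A * u * (N * (N - 3) / 2) * (c1 ^ 4 * \<delta> ^ 2)"
    using E4 unfolding NN2 e1d by (simp add: algebra_simps)
  have "(A * u * N * (N - 3)) * (7 * (N - 1) * (N - 2) / 5760) = (A * u * N * (N - 3)) * ((c1 ^ 2 * \<delta>) ^ 2 / 2)"
    using E4' unfolding c4 by algebra
  then have "7 * (N - 1) * (N - 2) / 5760 = ((N - 1) / 24) ^ 2 / 2"
    using A0 u0 Nb unfolding D by simp
  then have "(N - 1) * (7 * (N - 2)) = (N - 1) * (5 * (N - 1))"
    by (simp add: field_simps power2_eq_square)
  then have "2 * N = 9" using Nb by simp
  then have "of_nat (2 * n) = (of_nat 9 :: rat)" by (simp add: N_def)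
  then have "2 * n = 9" by (simp only: of_nat_eq_iff)
  then show False by presburger
qed

end
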